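(* Let $0<p=p(n)\le 2/n$ with $n^2p=\omega(1)$. Let $H$ be an $n$-vertex connected graph with maximum degree $\Delta$, $1\le\Delta\le n^2p/57600$. Let $G=G(n,p)$ on $V(H)$ and $R:=H\cup G$. Then whp $\mathrm{td}(R)=\Omega(\mathrm{td}(H)+n^2p/\Delta)$.
   Context: $G(n,p)$ is the binomial random graph; asymptotics are as $n\to\infty$; whp means with probability $1-o(1)$; $\Omega$ hides an absolute positive constant. Treedepth $\mathrm{td}(G)$ is defined recursively: $\mathrm{td}(G)=1$ if $|V(G)|=1$; $\mathrm{td}(G)=1+\min_v\mathrm{td}(G-v)$ if $G$ is connected with $|V(G)|>1$; $\mathrm{td}(G)=\max_i\mathrm{td}(G_i)$ over the components $G_i$ if $G$ is disconnected. *)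

theory Defs
  imports Complex_Main
begin

definition all_pairs :: "nat \<Rightarrow> nat set set" where
  "all_pairs n = {{u, v} | u v. u < n \<and> v < n \<and> u \<noteq> v}"

definition is_graph :: "nat \<Rightarrow> nat set set \<Rightarrow> bool" where
  "is_graph n E \<longleftrightarrow> E \<subseteq> all_pairs n"

definition adj_in :: "nat set set \<Rightarrow> nat set \<Rightarrow> nat \<Rightarrow> nat \<Rightarrow> bool" where
  "adj_in E V u v \<longleftrightarrow> u \<in> V \<and> v \<in> V \<and> u \<noteq> v \<and> {u, v} \<in> E"

definition connected_on :: "nat set set \<Rightarrow> nat set \<Rightarrow> bool" where
  "connected_on E V \<longleftrightarrow> V \<noteq> {} \<and> (\<forall>u\<in>V. \<forall>v\<in>V. (adj_in E V)\<^sup>*\<^sup>* u v)"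

definition component_of :: "nat set set \<Rightarrow> nat set \<Rightarrow> nat \<Rightarrow> nat set" where
  "component_of E V u = {v \<in> V. (adj_in E V)\<^sup>*\<^sup>* u v}"

definition components :: "nat set set \<Rightarrow> nat set \<Rightarrow> nat set set" where
  "components E V = component_of E V ` V"

text \<open>In the disconnected case every component
is a proper subset of V; the guard C \<subset> V only serves the termination proof.\<close>
function td :: "nat set set \<Rightarrow> nat set \<Rightarrow> nat" where
  "td E V =
     (if infinite V \<or> V = {} then 0
      else if card V = 1 then 1
      else if connected_on E V then 1 + Min ((\<lambda>v. td E (V - {v})) ` V)
      else Max ((\<lambda>C. td E C) ` {C \<in> components E V. C \<subset> V}))"
  by pat_completeness auto
termination
  by (relation "measure (\<lambda>(E, V). card V)")
     (auto intro: psubset_card_mono card_Diff1_less simp: card_gt_0_iff)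

definition degree :: "nat set set \<Rightarrow> nat \<Rightarrow> nat" where
  "degree E u = card {v. v \<noteq> u \<and> {u, v} \<in> E}"

definition max_degree :: "nat \<Rightarrow> nat set set \<Rightarrow> nat" where
  "max_degree n E = Max (degree E ` {..<n})"

definition gnp_prob :: "nat \<Rightarrow> real \<Rightarrow> (nat set set \<Rightarrow> bool) \<Rightarrow> real" where
  "gnp_prob n p P =
     (\<Sum>S\<in>{S. S \<subseteq> all_pairs n \<and> P S}.
        p ^ card S * (1 - p) ^ (card (all_pairs n) - card S))"

end

theory Submission
  imports Defs
begin


declare td.simps[simp del]

lemma adj_sym: "adj_in E V u v \<Longrightarrow> adj_in E V v u"
  unfolding adj_in_def by (auto simp: insert_commute)

lemma reach_sym: "(adj_in E V)\<^sup>*\<^sup>* u v \<Longrightarrow> (adj_in E V)\<^sup>*\<^sup>* v u"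
proof (induction rule: rtranclp_induct)
  case base then show ?case by simp
next
  case (step y z) then show ?case
    by (meson adj_sym converse_rtranclp_into_rtranclp)
qed

lemma reach_mono: "(adj_in E V)\<^sup>*\<^sup>* u v \<Longrightarrow> E \<subseteq> E' \<Longrightarrow> V \<subseteq> V' \<Longrightarrow> (adj_in E' V')\<^sup>*\<^sup>* u v"
proof (induction rule: rtranclp_induct)
  case base then show ?case by simp
next
  case (step y z)
  then have "adj_in E' V' y z" unfolding adj_in_def by auto
  with step show ?case by (meson rtranclp.rtrancl_into_rtrancl)
qed

lemma reach_in: "(adj_in E V)\<^sup>*\<^sup>* u v \<Longrightarrow> u \<noteq> v \<Longrightarrow> v \<in> V"
  by (induction rule: rtranclp_induct) (auto simp: adj_in_def)

lemma reach_in2: "(adj_in E V)\<^sup>*\<^sup>* u v \<Longrightarrow> u \<in> V \<Longrightarrow> v \<in> V"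
  using reach_in by blast

lemma comp_sub: "component_of E V u \<subseteq> V"
  unfolding component_of_def by auto

lemma comp_self: "u \<in> V \<Longrightarrow> u \<in> component_of E V u"
  unfolding component_of_def by auto

lemma comp_eq: "v \<in> component_of E V u \<Longrightarrow> component_of E V v = component_of E V u"
  unfolding component_of_def
  by (auto intro: rtranclp_trans reach_sym)

lemma comp_connected:
  assumes "u \<in> V" shows "connected_on E (component_of E V u)"
proof -
  let ?C = "component_of E V u"
  have "(adj_in E ?C)\<^sup>*\<^sup>* u v" if "v \<in> ?C" for v
  proof -
    have "(adj_in E V)\<^sup>*\<^sup>* u v" using that by (simp add: component_of_def)
    then show ?thesis
    proof (induction rule: rtranclp_induct)
      case base then show ?case by simp
    next
      case (step y z)
      then have "y \<in> ?C" "z \<in> ?C" using assms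
        by (auto simp: component_of_def adj_in_def intro: rtranclp.rtrancl_into_rtrancl)
      with step have "adj_in E ?C y z" by (auto simp: adj_in_def)
      with step show ?case by (meson rtranclp.rtrancl_into_rtrancl)
    qed
  qed
  then show ?thesis unfolding connected_on_def using assms comp_self[of u V E]
    by (metis empty_iff reach_sym rtranclp_trans)
qed

lemma connected_comp_full:
  assumes "connected_on E V" "u \<in> V" shows "component_of E V u = V"
  using assms unfolding connected_on_def component_of_def by auto

lemma not_conn_comp_proper:
  assumes "\<not> connected_on E V" "u \<in> V" shows "component_of E V u \<subset> V"
  using comp_sub[of E V u] comp_connected[OF assms(2), of E] assms by auto

lemma td_simps_empty: "td E {} = 0" by (subst td.simps) simp

lemma td_single: "card V = 1 \<Longrightarrow> td E V = 1"
  by (subst td.simps) (auto dest: card_eq_SucD)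

lemma td_conn: "finite V \<Longrightarrow> card V \<ge> 2 \<Longrightarrow> connected_on E V \<Longrightarrow>
   td E V = 1 + Min ((\<lambda>v. td E (V - {v})) ` V)"
  by (subst td.simps) auto

lemma td_disc: "finite V \<Longrightarrow> card V \<ge> 2 \<Longrightarrow> \<not> connected_on E V \<Longrightarrow>
   td E V = Max ((\<lambda>C. td E C) ` {C \<in> components E V. C \<subset> V})"
  by (subst td.simps) auto

lemma td_disc_ge: "finite V \<Longrightarrow> card V \<ge> 2 \<Longrightarrow> \<not> connected_on E V \<Longrightarrow> u \<in> V \<Longrightarrow>
   td E (component_of E V u) \<le> td E V"
  apply (subst (2) td_disc, assumption+)
  apply (rule Max_ge)
   apply (simp add: components_def)
  using not_conn_comp_proper[of E V u] by (auto simp: components_def)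

lemma td_disc_le: "finite V \<Longrightarrow> card V \<ge> 2 \<Longrightarrow> \<not> connected_on E V \<Longrightarrow>
   (\<And>u. u \<in> V \<Longrightarrow> td E (component_of E V u) \<le> k) \<Longrightarrow> td E V \<le> k"
  apply (subst td_disc, assumption+)
  apply (subst Max_le_iff)
    apply (simp add: components_def)
  using not_conn_comp_proper[of E V] apply (auto simp: components_def)
  by (metis card.empty card_gt_0_iff equals0I not_numeral_le_zero)

lemma td_conn_le: "finite V \<Longrightarrow> card V \<ge> 2 \<Longrightarrow> connected_on E V \<Longrightarrow> v \<in> V \<Longrightarrow>
   td E V \<le> 1 + td E (V - {v})"
  apply (subst td_conn, assumption+)
  by (simp add: Min_le)

lemma td_conn_ex: "finite V \<Longrightarrow> card V \<ge> 2 \<Longrightarrow> connected_on E V \<Longrightarrow>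
   \<exists>v\<in>V. td E V = 1 + td E (V - {v})"
proof -
  assume a: "finite V" "card V \<ge> 2" "connected_on E V"
  then have "V \<noteq> {}" by auto
  then have "Min ((\<lambda>v. td E (V - {v})) ` V) \<in> (\<lambda>v. td E (V - {v})) ` V"
    using a by (intro Min_in) auto
  then show ?thesis using td_conn[OF a] by auto
qed




lemma td_pos: "finite V \<Longrightarrow> V \<noteq> {} \<Longrightarrow> 1 \<le> td E V"
proof (induction "card V" arbitrary: V rule: less_induct)
  case less
  show ?case
  proof (cases "card V = 1")
    case True then show ?thesis by (simp add: td_single)
  next
    case False
    then have c2: "card V \<ge> 2" using less.prems by (cases "card V") (auto simp: card_gt_0_iff)
    show ?thesis
    proof (cases "connected_on E V")
      case True then show ?thesis using td_conn[OF less.prems(1) c2 True] by simp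
    next
      case nc: False
      obtain u where u: "u \<in> V" using less.prems by auto
      have ps: "component_of E V u \<subset> V" using not_conn_comp_proper[OF nc u] .
      have "1 \<le> td E (component_of E V u)"
      proof (rule less.hyps)
        show "card (component_of E V u) < card V" using ps less.prems(1) psubset_card_mono by blast
        show "finite (component_of E V u)" using ps less.prems(1) finite_subset by blast
        show "component_of E V u \<noteq> {}" using comp_self[OF u, of E] by auto
      qed
      also have "\<dots> \<le> td E V" using td_disc_ge[OF less.prems(1) c2 nc u] .
      finally show ?thesis .
    qed
  qed
qed

lemma conn_in_comp:
  assumes "connected_on E W" "W \<subseteq> V" "E \<subseteq> E'" "w \<in> W"
  shows "W \<subseteq> component_of E' V w"
proof
  fix x assume "x \<in> W"
  then have "(adj_in E W)\<^sup>*\<^sup>* w x" using assms unfolding connected_on_def by auto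
  then have "(adj_in E' V)\<^sup>*\<^sup>* w x" using reach_mono assms by blast
  then show "x \<in> component_of E' V w" using \<open>x \<in> W\<close> assms unfolding component_of_def by auto
qed

lemma td_mono_aux:
  "finite V \<Longrightarrow> W \<subseteq> V \<Longrightarrow> E \<subseteq> E' \<Longrightarrow> td E W \<le> td E' V"
proof (induction "card V + card W" arbitrary: V W rule: less_induct)
  case less
  have fW: "finite W" using less.prems finite_subset by blast
  show ?case
  proof (cases "W = {}")
    case True then show ?thesis by (simp add: td_simps_empty)
  next
    case Wne: False
    show ?thesis
    proof (cases "card W = 1")
      case True
      have "V \<noteq> {}" using Wne less.prems(2) by auto
      then have "1 \<le> td E' V" using td_pos[OF less.prems(1)] by blast
      then show ?thesis unfolding td_single[OF True] .
    next
      case False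
      then have cW: "card W \<ge> 2" using Wne fW by (cases "card W") (auto simp: card_gt_0_iff)
      have cV: "card V \<ge> 2" using cW card_mono[OF less.prems(1,2)] by linarith
      show ?thesis
      proof (cases "connected_on E W")
        case ncW: False
        show ?thesis
        proof (rule td_disc_le[OF fW cW ncW])
          fix u assume u: "u \<in> W"
          have ps: "component_of E W u \<subset> W" using not_conn_comp_proper[OF ncW u] .
          then have "card (component_of E W u) < card W" using fW psubset_card_mono by blast
          then show "td E (component_of E W u) \<le> td E' V"
            by (intro less.hyps) (use less.prems ps in auto)
        qed
      next
        case cWc: True
        show ?thesis
        proof (cases "connected_on E' V")
          case cV': True
          from td_conn_ex[OF less.prems(1) cV cV']
          obtain v where v: "v \<in> V" "td E' V = 1 + td E' (V - {v})" ..
          have cVv: "card (V - {v}) < card V" by (rule card_Diff1_less[OF less.prems(1) v(1)])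
          show ?thesis
          proof (cases "v \<in> W")
            case False
            then have "W \<subseteq> V - {v}" using less.prems by auto
            then have "td E W \<le> td E' (V - {v})"
              by (intro less.hyps) (use less.prems cVv in auto)
            then show ?thesis using v(2) by linarith
          next
            case True
            have cWv: "card (W - {v}) < card W" by (rule card_Diff1_less[OF fW True])
            have "td E W \<le> 1 + td E (W - {v})" using td_conn_le[OF fW cW cWc True] .
            also have "td E (W - {v}) \<le> td E' (V - {v})"
              by (intro less.hyps) (use less.prems cVv cWv in auto)
            finally show ?thesis using v(2) by linarith
          qed
        next
          case ncV: False
          obtain w where w: "w \<in> W" using Wne by auto
          have wV: "w \<in> V" using w less.prems by auto
          let ?C = "component_of E' V w"
          have WC: "W \<subseteq> ?C" using conn_in_comp[OF cWc less.prems(2,3) w] .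
          have ps: "?C \<subset> V" using not_conn_comp_proper[OF ncV wV] .
          then have "card ?C < card V" using less.prems(1) psubset_card_mono by blast
          then have "td E W \<le> td E' ?C"
            by (intro less.hyps) (use less.prems WC finite_subset[OF comp_sub less.prems(1)] in auto)
          also have "\<dots> \<le> td E' V" using td_disc_ge[OF less.prems(1) cV ncV wV] .
          finally show ?thesis .
        qed
      qed
    qed
  qed
qed




lemma comp_restrict:
  assumes x: "x \<in> V" and w: "w \<in> component_of E V x - S"
  shows "component_of E (V - S) w = component_of E (component_of E V x - S) w"
proof
  let ?C = "component_of E V x"
  show "component_of E (V - S) w \<subseteq> component_of E (?C - S) w"
  proof
    fix y assume "y \<in> component_of E (V - S) w"
    then have r: "(adj_in E (V - S))\<^sup>*\<^sup>* w y" "y \<in> V - S" by (auto simp: component_of_def)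
    have "y \<in> ?C \<and> (adj_in E (?C - S))\<^sup>*\<^sup>* w y" using r(1)
    proof (induction rule: rtranclp_induct)
      case base then show ?case using w by simp
    next
      case (step y z)
      then have yC: "y \<in> ?C" and ryy: "(adj_in E (?C - S))\<^sup>*\<^sup>* w y" by auto
      have a: "adj_in E (V - S) y z" by fact
      have "(adj_in E V)\<^sup>*\<^sup>* x y" using yC by (simp add: component_of_def)
      moreover have "adj_in E V y z" using a by (auto simp: adj_in_def)
      ultimately have "(adj_in E V)\<^sup>*\<^sup>* x z" by (rule rtranclp.rtrancl_into_rtrancl)
      then have zC: "z \<in> ?C" using a by (auto simp: component_of_def adj_in_def)
      have "adj_in E (?C - S) y z" using a yC zC by (auto simp: adj_in_def)
      then show ?case using zC ryy by (meson rtranclp.rtrancl_into_rtrancl)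
    qed
    then show "y \<in> component_of E (?C - S) w" using r(2) by (auto simp: component_of_def)
  qed
next
  let ?C = "component_of E V x"
  show "component_of E (?C - S) w \<subseteq> component_of E (V - S) w"
    unfolding component_of_def using comp_sub[of E V x]
    by (auto intro: reach_mono[where E=E and E'=E])
qed

lemma comp_disjoint:
  assumes "w \<in> V" "w \<notin> component_of E V x"
  shows "component_of E V w \<inter> component_of E V x = {}"
proof (rule ccontr)
  assume "component_of E V w \<inter> component_of E V x \<noteq> {}"
  then obtain y where "(adj_in E V)\<^sup>*\<^sup>* w y" "(adj_in E V)\<^sup>*\<^sup>* x y"
    by (auto simp: component_of_def)
  then have "(adj_in E V)\<^sup>*\<^sup>* x w" by (meson reach_sym rtranclp_trans)
  then show False using assms by (auto simp: component_of_def)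
qed

lemma comp_mono_V: "W \<subseteq> V \<Longrightarrow> component_of E W u \<subseteq> component_of E V u"
  unfolding component_of_def by (auto intro: reach_mono[where E=E and E'=E])

lemma separator:
  "finite V \<Longrightarrow> card V \<le> 2 * K \<Longrightarrow>
   \<exists>S \<subseteq> V. card S \<le> td E V \<and> (\<forall>u \<in> V - S. card (component_of E (V - S) u) \<le> K)"
proof (induction "card V" arbitrary: V rule: less_induct)
  case less
  show ?case
  proof (cases "card V \<le> K")
    case True
    have "\<forall>u \<in> V - {}. card (component_of E (V - {}) u) \<le> K"
      using card_mono[OF less.prems(1) comp_sub] True by (auto intro: le_trans)
    then show ?thesis by (intro exI[of _ "{}"]) auto
  next
    case big: False
    have c2: "card V \<ge> 2" using big less.prems(2) by linarith
    show ?thesis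
    proof (cases "connected_on E V")
      case True
      from td_conn_ex[OF less.prems(1) c2 True]
      obtain v where v: "v \<in> V" "td E V = 1 + td E (V - {v})" ..
      have cv: "card (V - {v}) < card V" by (rule card_Diff1_less[OF less.prems(1) v(1)])
      have "\<exists>S \<subseteq> V - {v}. card S \<le> td E (V - {v}) \<and>
              (\<forall>u \<in> (V - {v}) - S. card (component_of E ((V - {v}) - S) u) \<le> K)"
        by (rule less.hyps[OF cv]) (use less.prems cv in auto)
      then obtain S where S: "S \<subseteq> V - {v}" "card S \<le> td E (V - {v})"
        "\<forall>u \<in> (V - {v}) - S. card (component_of E ((V - {v}) - S) u) \<le> K" by blast
      have fS: "finite S" using S(1) less.prems(1) finite_subset by blast
      have e: "V - insert v S = (V - {v}) - S" by auto
      have "card (insert v S) \<le> td E V"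
        using card_insert_le_m1 fS S(2) v(2) by (simp add: card_insert_if)
      then show ?thesis using S(1,3) v(1) e by (intro exI[of _ "insert v S"]) auto
    next
      case nc: False
      show ?thesis
      proof (cases "\<forall>u \<in> V. card (component_of E V u) \<le> K")
        case True then show ?thesis by (intro exI[of _ "{}"]) auto
      next
        case False
        then obtain x where x: "x \<in> V" "card (component_of E V x) > K" by (auto simp: not_le)
        let ?C = "component_of E V x"
        have ps: "?C \<subset> V" by (rule not_conn_comp_proper[OF nc x(1)])
        have fC: "finite ?C" using finite_subset[OF comp_sub less.prems(1)] .
        have cC: "card ?C < card V" by (rule psubset_card_mono[OF less.prems(1) ps])
        have "\<exists>S \<subseteq> ?C. card S \<le> td E ?C \<and>
              (\<forall>u \<in> ?C - S. card (component_of E (?C - S) u) \<le> K)"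
          by (rule less.hyps[OF cC fC]) (use less.prems cC in auto)
        then obtain S where S: "S \<subseteq> ?C" "card S \<le> td E ?C"
          "\<forall>u \<in> ?C - S. card (component_of E (?C - S) u) \<le> K" by blast
        have tdC: "td E ?C \<le> td E V" by (rule td_disc_ge[OF less.prems(1) c2 nc x(1)])
        have "\<forall>u \<in> V - S. card (component_of E (V - S) u) \<le> K"
        proof
          fix u assume u: "u \<in> V - S"
          show "card (component_of E (V - S) u) \<le> K"
          proof (cases "u \<in> ?C")
            case True
            then show ?thesis using comp_restrict[OF x(1), where w=u and S=S and E=E] S(3) u by auto
          next
            case False
            have d: "component_of E V u \<inter> ?C = {}" using comp_disjoint[of u V E x] u False by auto
            have "component_of E V u \<subseteq> V - ?C" using d comp_sub[of E V u] by auto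
            then have "card (component_of E V u) \<le> card (V - ?C)"
              by (rule card_mono[OF finite_Diff[OF less.prems(1)]])
            also have "\<dots> = card V - card ?C" by (rule card_Diff_subset[OF fC comp_sub])
            finally have "card (component_of E V u) \<le> K" using x(2) less.prems(2) by linarith
            moreover have "card (component_of E (V - S) u) \<le> card (component_of E V u)"
              by (rule card_mono[OF finite_subset[OF comp_sub less.prems(1)] comp_mono_V]) auto
            ultimately show ?thesis by linarith
          qed
        qed
        then show ?thesis using S(1,2) tdC comp_sub[of E V x]
          by (intro exI[of _ S]) auto
      qed
    qed
  qed
qed




lemma greedy_split:
  assumes "finite CC" "\<forall>C\<in>CC. finite C \<and> card C \<le> K" "pairwise disjnt CC"
    "a \<le> card (\<Union>CC)"
  shows "\<exists>DD \<subseteq> CC. a \<le> card (\<Union>DD) \<and> card (\<Union>DD) \<le> a + K"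
  using assms
proof (induction CC rule: finite_induct)
  case empty then show ?case by auto
next
  case (insert C CC)
  have fU: "finite (\<Union>CC)" by (rule finite_Union[OF insert.hyps(1)]) (use insert.prems(1) in blast)
  have pw: "\<forall>y\<in>CC. y \<noteq> C \<longrightarrow> disjnt C y \<and> disjnt y C" "pairwise disjnt CC"
    using insert.prems(2) unfolding pairwise_insert by auto
  have dj: "C \<inter> \<Union>CC = {}"
  proof (rule ccontr)
    assume "C \<inter> \<Union>CC \<noteq> {}"
    then obtain x y where "x \<in> C" "y \<in> CC" "x \<in> y" by auto
    moreover have "y \<noteq> C" using \<open>y \<in> CC\<close> insert.hyps(2) by auto
    ultimately show False using pw(1) unfolding disjnt_def by auto
  qed
  have fC: "finite C" using insert.prems(1) by simp
  have cu: "card (\<Union>(insert C CC)) = card C + card (\<Union>CC)"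
    using card_Un_disjoint[OF fC fU dj] by simp
  show ?case
  proof (cases "a \<le> card (\<Union>CC)")
    case True
    have "\<exists>DD \<subseteq> CC. a \<le> card (\<Union>DD) \<and> card (\<Union>DD) \<le> a + K"
    proof (rule insert.IH)
      show "\<forall>C\<in>CC. finite C \<and> card C \<le> K" using insert.prems(1) by simp
    qed (use pw(2) True in auto)
    then show ?thesis by blast
  next
    case False
    have "card C \<le> K" using insert.prems(1) by simp
    then have "card (\<Union>(insert C CC)) \<le> a + K" using cu False by linarith
    then show ?thesis using insert.prems(3) by (intro exI[of _ "insert C CC"]) simp
  qed
qed

definition cnt :: "'a \<Rightarrow> 'a list \<Rightarrow> nat" where
  "cnt x w = length (filter (\<lambda>y. y = x) w)"

lemma cnt_append[simp]: "cnt x (xs @ ys) = cnt x xs + cnt x ys"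
  by (simp add: cnt_def)

lemma cnt_notin: "x \<notin> set w \<Longrightarrow> cnt x w = 0"
  by (induction w) (auto simp: cnt_def)

lemma cnt_le_length: "cnt x w \<le> length w"
  by (simp add: cnt_def)

lemma reach_first_nbr:
  assumes "(adj_in E V)\<^sup>*\<^sup>* r y" "y \<noteq> r"
  shows "\<exists>u. adj_in E V r u \<and> u \<in> V - {r} \<and> (adj_in E (V - {r}))\<^sup>*\<^sup>* u y"
  using assms
proof (induction rule: rtranclp_induct)
  case base then show ?case by simp
next
  case (step y z)
  show ?case
  proof (cases "y = r")
    case True
    then show ?thesis using step by (auto simp: adj_in_def)
  next
    case False
    then obtain u where u: "adj_in E V r u" "u \<in> V - {r}" "(adj_in E (V - {r}))\<^sup>*\<^sup>* u y"
      using step by blast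
    have "adj_in E (V - {r}) y z" using step(2) step(4) False by (auto simp: adj_in_def)
    then show ?thesis using u by (meson rtranclp.rtrancl_into_rtrancl)
  qed
qed

lemma comp_disj2: "component_of E V a \<noteq> component_of E V b \<Longrightarrow>
   component_of E V a \<inter> component_of E V b = {}"
  by (metis comp_eq disjoint_iff)




definition deg_ok :: "nat set set \<Rightarrow> nat set \<Rightarrow> nat \<Rightarrow> bool" where
  "deg_ok E V D \<longleftrightarrow> (\<forall>x\<in>V. card {y\<in>V. adj_in E V x y} \<le> D)"

lemma deg_ok_sub: assumes "deg_ok E V D" "W \<subseteq> V" "finite V" shows "deg_ok E W D"
  unfolding deg_ok_def
proof
  fix x assume x: "x \<in> W"
  have "{y\<in>W. adj_in E W x y} \<subseteq> {y\<in>V. adj_in E V x y}"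
    using assms(2) by (auto simp: adj_in_def)
  then have "card {y\<in>W. adj_in E W x y} \<le> card {y\<in>V. adj_in E V x y}"
    by (rule card_mono[rotated]) (use assms(3) in simp)
  also have "\<dots> \<le> D" using assms(1,2) x unfolding deg_ok_def by auto
  finally show "card {y\<in>W. adj_in E W x y} \<le> D" .
qed

lemma comp_has_nbr:
  assumes "connected_on E V" "r \<in> V" "c \<in> V - {r}"
  shows "\<exists>u \<in> component_of E (V - {r}) c. adj_in E V r u"
proof -
  have "(adj_in E V)\<^sup>*\<^sup>* r c" using assms unfolding connected_on_def by auto
  then obtain u where u: "adj_in E V r u" "u \<in> V - {r}" "(adj_in E (V - {r}))\<^sup>*\<^sup>* u c"
    using reach_first_nbr[of E V r c] assms(3) by auto
  have "u \<in> component_of E (V - {r}) c"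
    using u(2) reach_sym[OF u(3)] by (simp add: component_of_def)
  then show ?thesis using u(1) by blast
qed

lemma walk_exists:
  "finite V \<Longrightarrow> connected_on E V \<Longrightarrow> r \<in> V \<Longrightarrow> deg_ok E V D \<Longrightarrow>
   \<exists>w. w \<noteq> [] \<and> hd w = r \<and> last w = r \<and> set w = V \<and> length w + 1 \<le> 2 * card V \<and>
      successively (adj_in E V) w \<and> (\<forall>x. cnt x w \<le> D + 1)"
proof (induction "card V" arbitrary: V r rule: less_induct)
  case less
  let ?V' = "V - {r}"
  let ?CC = "component_of E ?V' ` ?V'"
  have fV': "finite ?V'" using less.prems(1) by simp
  have inner: "\<exists>w. w \<noteq> [] \<and> hd w = r \<and> last w = r \<and> set w = insert r (\<Union>QQ) \<and>
        length w \<le> 2 * card (\<Union>QQ) + 1 \<and> successively (adj_in E V) w \<and> cnt r w \<le> 1 + card QQ \<and>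
        (\<forall>x. x \<noteq> r \<longrightarrow> cnt x w \<le> D + 1)"
    if "finite QQ" "QQ \<subseteq> ?CC" for QQ
    using that
  proof (induction QQ rule: finite_induct)
    case empty
    show ?case by (intro exI[of _ "[r]"]) (auto simp: cnt_def)
  next
    case (insert C QQ)
    obtain w where w: "w \<noteq> []" "hd w = r" "last w = r" "set w = insert r (\<Union>QQ)"
        "length w \<le> 2 * card (\<Union>QQ) + 1" "successively (adj_in E V) w" "cnt r w \<le> 1 + card QQ"
        "\<forall>x. x \<noteq> r \<longrightarrow> cnt x w \<le> D + 1"
      using insert.IH insert.prems by auto
    obtain c where c: "c \<in> ?V'" "C = component_of E ?V' c" using insert.prems by auto
    obtain u where u: "u \<in> C" "adj_in E V r u"
      using comp_has_nbr[OF less.prems(2,3) c(1)] c(2) by blast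
    have CV': "C \<subseteq> ?V'" using c(2) comp_sub by simp
    have fC: "finite C" using finite_subset[OF CV' fV'] .
    have cC: "card C < card V"
    proof -
      have "card C \<le> card ?V'" by (rule card_mono[OF fV' CV'])
      also have "\<dots> < card V" by (rule card_Diff1_less[OF less.prems(1,3)])
      finally show ?thesis .
    qed
    have conC: "connected_on E C" using comp_connected[OF c(1)] c(2) by simp
    have dC: "deg_ok E C D" using deg_ok_sub[OF less.prems(4) _ less.prems(1)] CV' by blast
    obtain wC where wC: "wC \<noteq> []" "hd wC = u" "last wC = u" "set wC = C" "length wC + 1 \<le> 2 * card C"
        "successively (adj_in E C) wC" "\<forall>x. cnt x wC \<le> D + 1"
      using less.hyps[OF cC fC conC u(1) dC] by blast
    have dj: "C \<inter> \<Union>QQ = {}"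
    proof (rule ccontr)
      assume "C \<inter> \<Union>QQ \<noteq> {}"
      then obtain x C' where x: "x \<in> C" "C' \<in> QQ" "x \<in> C'" by auto
      then have "C' \<noteq> C" using insert.hyps(2) by auto
      moreover obtain c' where "c' \<in> ?V'" "C' = component_of E ?V' c'" using insert.prems x(2) by auto
      ultimately have "C' \<inter> C = {}" using c(2) comp_disj2 by metis
      then show False using x by auto
    qed
    have fU: "finite (\<Union>QQ)"
    proof -
      have "\<Union>QQ \<subseteq> ?V'"
      proof (rule Union_least)
        fix X assume "X \<in> QQ"
        then obtain c where "X = component_of E ?V' c" using insert.prems by auto
        then show "X \<subseteq> ?V'" using comp_sub by simp
      qed
      then show ?thesis by (rule finite_subset[OF _ fV'])
    qed
    have cu: "card (\<Union>(insert C QQ)) = card C + card (\<Union>QQ)"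
      using card_Un_disjoint[OF fC fU dj] by simp
    have rC: "r \<notin> C" using CV' by auto
    let ?w = "w @ wC @ [r]"
    have s1: "successively (adj_in E V) wC"
      by (rule successively_mono[OF wC(6)]) (use CV' in \<open>auto simp: adj_in_def\<close>)
    have ur: "adj_in E V u r" using adj_sym[OF u(2)] .
    have succ: "successively (adj_in E V) ?w"
      using w(1,3,6) wC(1,2,3) s1 u(2) ur by (simp add: successively_append_iff)
    have cntr: "cnt r ?w \<le> 1 + card (insert C QQ)"
      using w(7) cnt_notin[of r wC] wC(4) rC insert.hyps(1,2) by (simp add: cnt_def)
    have cntx: "cnt x ?w \<le> D + 1" if "x \<noteq> r" for x
    proof (cases "x \<in> C")
      case True
      then have "x \<notin> set w" using w(4) dj that by auto
      then show ?thesis using cnt_notin[of x w] wC(7) that by (simp add: cnt_def)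
    next
      case False
      then show ?thesis using cnt_notin[of x wC] wC(4) w(8) that by (simp add: cnt_def)
    qed
    show ?case
    proof (intro exI[of _ ?w] conjI allI impI)
      show "?w \<noteq> []" by simp
      show "hd ?w = r" using w(1,2) by simp
      show "last ?w = r" by simp
      show "set ?w = insert r (\<Union>(insert C QQ))" using w(4) wC(4) by auto
      show "length ?w \<le> 2 * card (\<Union>(insert C QQ)) + 1" using w(5) wC(5) cu by simp
      show "successively (adj_in E V) ?w" by (rule succ)
      show "cnt r ?w \<le> 1 + card (insert C QQ)" by (rule cntr)
      show "cnt x ?w \<le> D + 1" if "x \<noteq> r" for x using cntx that by blast
    qed
  qed
  have fCC: "finite ?CC" using fV' by simp
  obtain w where w: "w \<noteq> []" "hd w = r" "last w = r" "set w = insert r (\<Union>?CC)"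
        "length w \<le> 2 * card (\<Union>?CC) + 1" "successively (adj_in E V) w" "cnt r w \<le> 1 + card ?CC"
        "\<forall>x. x \<noteq> r \<longrightarrow> cnt x w \<le> D + 1"
    using inner[OF fCC] by blast
  have U: "\<Union>?CC = ?V'"
  proof
    show "\<Union>?CC \<subseteq> ?V'" by (rule UN_least, rule comp_sub)
    show "?V' \<subseteq> \<Union>?CC"
    proof
      fix x assume x: "x \<in> ?V'"
      show "x \<in> \<Union>?CC" by (rule UnionI[OF imageI[OF x]], rule comp_self[OF x])
    qed
  qed
  let ?N = "{y\<in>V. adj_in E V r y}"
  have NV: "?N \<subseteq> ?V'" by (auto simp: adj_in_def)
  have "?CC \<subseteq> component_of E ?V' ` ?N"
  proof
    fix C assume "C \<in> ?CC"
    then obtain c where c: "c \<in> ?V'" "C = component_of E ?V' c" by auto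
    obtain u where u: "u \<in> C" "adj_in E V r u"
      using comp_has_nbr[OF less.prems(2,3) c(1)] c(2) by blast
    have "component_of E ?V' u = C" using comp_eq u(1) c(2) by metis
    moreover have "u \<in> ?N" using u(2) by (auto simp: adj_in_def)
    ultimately show "C \<in> component_of E ?V' ` ?N" by blast
  qed
  then have "card ?CC \<le> card (component_of E ?V' ` ?N)"
    by (rule card_mono[rotated]) (use less.prems(1) in simp)
  also have "\<dots> \<le> card ?N" by (rule card_image_le) (use less.prems(1) in simp)
  also have "\<dots> \<le> D" using less.prems(3,4) unfolding deg_ok_def by blast
  finally have cCC: "card ?CC \<le> D" .
  have cV: "card ?V' + 1 = card V" using less.prems(1,3)
    by (metis One_nat_def Suc_pred card_Diff_singleton card_gt_0_iff empty_iff Suc_eq_plus1)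
  show ?case
  proof (intro exI[of _ w] conjI allI)
    show "w \<noteq> []" "hd w = r" "last w = r" "successively (adj_in E V) w" using w by auto
    show "set w = V" using w(4) U less.prems(3) by auto
    show "length w + 1 \<le> 2 * card V" using w(5) U cV by simp
    show "cnt x w \<le> D + 1" for x using w(7,8) cCC by (cases "x = r") auto
  qed
qed




definition piece :: "nat \<Rightarrow> 'a list \<Rightarrow> nat \<Rightarrow> 'a set" where
  "piece L w j = set (take L (drop (j * L) w))"

definition nchunks :: "nat \<Rightarrow> 'a list \<Rightarrow> nat" where
  "nchunks L w = length w div L + 1"

lemma succ_take_drop: "successively P xs \<Longrightarrow> successively P (take m (drop j xs))"
  unfolding successively_conv_nth by auto

lemma chunk_reach:
  assumes "successively (adj_in H V) c" "set c \<subseteq> V" "set c \<inter> S = {}" "H \<subseteq> R"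
  shows "\<forall>x\<in>set c. (adj_in R (V - S))\<^sup>*\<^sup>* (hd c) x"
  using assms
proof (induction c)
  case Nil then show ?case by simp
next
  case (Cons a c)
  show ?case
  proof (cases "c = []")
    case True then show ?thesis by simp
  next
    case False
    have s: "successively (adj_in H V) c" "adj_in H V a (hd c)"
      using Cons.prems(1) False by (auto simp: successively_Cons)
    have IH: "\<forall>x\<in>set c. (adj_in R (V - S))\<^sup>*\<^sup>* (hd c) x"
      using Cons.IH s(1) Cons.prems(2-4) by auto
    have "hd c \<in> set c" using False by simp
    then have "adj_in R (V - S) a (hd c)"
      using s(2) Cons.prems(2-4) by (auto simp: adj_in_def)
    then show ?thesis using IH
      by (auto intro: converse_rtranclp_into_rtranclp)
  qed
qed

lemma piece_sub: "piece L w j \<subseteq> set w"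
  unfolding piece_def by (meson order_trans set_drop_subset set_take_subset)

lemma piece_card: "card (piece L w j) \<le> L"
  unfolding piece_def by (metis card_length length_take min.bounded_iff order_refl)

lemma piece_cover:
  assumes "L \<ge> 1" "x \<in> set w" shows "\<exists>j < nchunks L w. x \<in> piece L w j"
proof -
  obtain i where i: "i < length w" "w ! i = x" using assms(2) by (auto simp: in_set_conv_nth)
  let ?j = "i div L"
  have e: "?j * L + i mod L = i" by (rule div_mult_mod_eq)
  have m: "i mod L < L" using assms(1) by simp
  have lt: "i mod L < length (take L (drop (?j * L) w))" using i(1) m e by (simp, arith)
  have "take L (drop (?j * L) w) ! (i mod L) = w ! i"
    using m lt e i(1) by (simp add: nth_drop)
  then have "x \<in> piece L w ?j" unfolding piece_def using lt i(2) by (metis nth_mem)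
  moreover have "?j < nchunks L w" unfolding nchunks_def using i(1)
    by (simp add: div_le_mono le_imp_less_Suc)
  ultimately show ?thesis by blast
qed

lemma piece_mult:
  assumes "L \<ge> 1" shows "card {j. j < nchunks L w \<and> x \<in> piece L w j} \<le> cnt x w"
proof -
  have "{j. j < nchunks L w \<and> x \<in> piece L w j} \<subseteq> (\<lambda>i. i div L) ` {i. i < length w \<and> w ! i = x}"
  proof
    fix j assume "j \<in> {j. j < nchunks L w \<and> x \<in> piece L w j}"
    then have "x \<in> set (take L (drop (j * L) w))" by (simp add: piece_def)
    then obtain i' where i': "i' < length (take L (drop (j * L) w))" "take L (drop (j * L) w) ! i' = x"
      by (auto simp: in_set_conv_nth)
    have a: "i' < L" "j * L + i' < length w" using i' by auto
    have b: "w ! (j * L + i') = x" using i' a by (simp add: nth_drop)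
    have "(j * L + i') div L = j" using a(1) by simp
    then show "j \<in> (\<lambda>i. i div L) ` {i. i < length w \<and> w ! i = x}"
      using a(2) b by (metis (mono_tags, lifting) image_eqI mem_Collect_eq)
  qed
  then have "card {j. j < nchunks L w \<and> x \<in> piece L w j} \<le> card ((\<lambda>i. i div L) ` {i. i < length w \<and> w ! i = x})"
    by (rule card_mono[rotated]) simp
  also have "\<dots> \<le> card {i. i < length w \<and> w ! i = x}" by (rule card_image_le) simp
  also have "\<dots> = cnt x w" by (simp add: cnt_def length_filter_conv_card)
  finally show ?thesis .
qed




definition UU :: "nat \<Rightarrow> nat list \<Rightarrow> nat set \<Rightarrow> nat set" where
  "UU L w J = \<Union> (piece L w ` J)"

definition Fset :: "nat \<Rightarrow> nat list \<Rightarrow> nat set \<Rightarrow> nat set \<Rightarrow> nat set set" where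
  "Fset L w JA JB = {{a, b} | a b. a \<in> UU L w JA \<and> b \<in> UU L w JB}"

definition Wit :: "nat \<Rightarrow> nat \<Rightarrow> nat list \<Rightarrow> (nat set \<times> nat set) set" where
  "Wit n L w = {(JA, JB). JA \<subseteq> {..<nchunks L w} \<and> JB \<subseteq> {..<nchunks L w} \<and>
      real n / 8 \<le> real (card (UU L w JA)) \<and> real n / 8 \<le> real (card (UU L w JB)) \<and>
      UU L w JA \<inter> UU L w JB = {}}"

lemma piece_finite[simp]: "finite (piece L w j)"
  by (simp add: piece_def)

lemma main_det:
  assumes w: "set w = {..<n}" "successively (adj_in H {..<n}) w" "\<forall>x. cnt x w \<le> D + 1"
    and L: "L \<ge> 1"
    and small: "real (td (H \<union> G) {..<n}) * real (D + 1) * real L \<le> real n / 16"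
    and n8: "n \<ge> 8"
  shows "\<exists>x \<in> Wit n L w. G \<inter> Fset L w (fst x) (snd x) = {}"
proof -
  define V where "V = {..<n}"
  define R where "R = H \<union> G"
  define K where "K = (n + 1) div 2"
  define k where "k = nchunks L w"
  have fV: "finite V" by (simp add: V_def)
  have cVn: "card V = n" by (simp add: V_def)
  have "card V \<le> 2 * K" unfolding K_def cVn by linarith
  from separator[OF fV this, of R]
  obtain S where S0: "S \<subseteq> V \<and> card S \<le> td R V \<and> (\<forall>u \<in> V - S. card (component_of R (V - S) u) \<le> K)" ..
  have S: "S \<subseteq> V" "card S \<le> td R V" "\<forall>u \<in> V - S. card (component_of R (V - S) u) \<le> K"
    using S0 by simp_all
  have fS: "finite S" using finite_subset[OF S(1) fV] .
  define J where "J = {j. j < k \<and> piece L w j \<inter> S = {}}"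
  define Hit where "Hit = {j. j < k \<and> piece L w j \<inter> S \<noteq> {}}"
  define U where "U = UU L w J"
  have pV: "piece L w j \<subseteq> V" for j using piece_sub[of L w j] w(1) by (simp add: V_def)
  have UV: "U \<subseteq> V" unfolding U_def UU_def using pV by (simp add: UN_least)
  have US: "U \<inter> S = {}" unfolding U_def UU_def J_def by auto
  have fU: "finite U" using finite_subset[OF UV fV] .
  have "Hit \<subseteq> (\<Union>x\<in>S. {j. j < k \<and> x \<in> piece L w j})" unfolding Hit_def by auto
  then have "card Hit \<le> card (\<Union>x\<in>S. {j. j < k \<and> x \<in> piece L w j})"
    by (rule card_mono[rotated]) (use fS in auto)
  also have "\<dots> \<le> (\<Sum>x\<in>S. card {j. j < k \<and> x \<in> piece L w j})" by (rule card_UN_le[OF fS])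
  also have "\<dots> \<le> (\<Sum>x\<in>S. D + 1)"
  proof (rule sum_mono)
    fix x assume "x \<in> S"
    show "card {j. j < k \<and> x \<in> piece L w j} \<le> D + 1"
      unfolding k_def using order_trans[OF piece_mult[OF L, of w x] w(3)[rule_format, of x]] .
  qed
  finally have cHit: "card Hit \<le> card S * (D + 1)" by simp
  have "V - U \<subseteq> UU L w Hit"
  proof
    fix x assume x: "x \<in> V - U"
    then have "x \<in> set w" using w(1) by (simp add: V_def)
    from piece_cover[OF L this]
    obtain j where j0: "j < nchunks L w \<and> x \<in> piece L w j" by auto
    then have j: "j < k" "x \<in> piece L w j" unfolding k_def by simp_all
    have "j \<notin> J" using x j unfolding U_def UU_def by auto
    then have "j \<in> Hit" using j unfolding J_def Hit_def by auto
    then show "x \<in> UU L w Hit" using j unfolding UU_def by auto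
  qed
  then have "card (V - U) \<le> card (UU L w Hit)"
    by (rule card_mono[rotated]) (simp add: UU_def Hit_def)
  also have "\<dots> \<le> (\<Sum>j\<in>Hit. card (piece L w j))"
    unfolding UU_def by (rule card_UN_le) (simp add: Hit_def)
  also have "\<dots> \<le> (\<Sum>j\<in>Hit. L)" by (rule sum_mono) (rule piece_card)
  finally have cVU: "card (V - U) \<le> card Hit * L" by simp
  have "card (V - U) \<le> card S * (D + 1) * L" using le_trans[OF cVU mult_le_mono1[OF cHit]] .
  then have "real (card (V - U)) \<le> real (card S * (D + 1) * L)" by (simp only: of_nat_le_iff)
  also have "\<dots> = real (card S) * real (D + 1) * real L" by (simp only: of_nat_mult)
  also have "\<dots> \<le> real (td R V) * real (D + 1) * real L"
    using S(2) by (intro mult_right_mono) auto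
  also have "\<dots> \<le> real n / 16" using small unfolding R_def V_def .
  finally have lost: "real (card (V - U)) \<le> real n / 16" .
  have cU: "card U = n - card (V - U)" using card_Diff_subset[OF fU UV] cVn
    by (metis Diff_Diff_Int Int_absorb1 UV card_Diff_subset finite_Diff fV Diff_subset)
  have cUr: "real (card U) \<ge> 15 * real n / 16"
  proof -
    have "card (V - U) \<le> n" using card_mono[OF fV, of "V - U"] cVn by auto
    then have "real (card U) = real n - real (card (V - U))" using cU by simp
    then show ?thesis using lost by simp
  qed
  define CC where "CC = (\<lambda>u. U \<inter> component_of R (V - S) u) ` U"
  have fCC: "finite CC" unfolding CC_def using fU by simp
  have CCb: "\<forall>C\<in>CC. finite C \<and> card C \<le> K"
  proof
    fix C assume "C \<in> CC"
    then obtain u where u: "u \<in> U" "C = U \<inter> component_of R (V - S) u" unfolding CC_def by auto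
    have "u \<in> V - S" using u(1) UV US by auto
    then have "card (component_of R (V - S) u) \<le> K" using S(3) by blast
    moreover have "card C \<le> card (component_of R (V - S) u)"
    proof (rule card_mono)
      show "finite (component_of R (V - S) u)" by (rule finite_subset[OF comp_sub]) (use fV in simp)
      show "C \<subseteq> component_of R (V - S) u" using u(2) by simp
    qed
    ultimately show "finite C \<and> card C \<le> K" using u(2) fU by simp
  qed
  have pw: "pairwise disjnt CC"
    unfolding pairwise_def disjnt_def
  proof (intro ballI impI)
    fix C1 C2 assume a: "C1 \<in> CC" "C2 \<in> CC" "C1 \<noteq> C2"
    then obtain u1 u2 where "C1 = U \<inter> component_of R (V - S) u1" "C2 = U \<inter> component_of R (V - S) u2"
      unfolding CC_def by auto
    then show "C1 \<inter> C2 = {}" using a(3) comp_disj2[of R "V - S" u1 u2] by auto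
  qed
  have UCC: "\<Union>CC = U"
  proof
    show "\<Union>CC \<subseteq> U" unfolding CC_def by auto
    show "U \<subseteq> \<Union>CC"
    proof
      fix u assume u: "u \<in> U"
      then have "u \<in> V - S" using UV US by auto
      then have "u \<in> U \<inter> component_of R (V - S) u" using u comp_self by auto
      then show "u \<in> \<Union>CC" unfolding CC_def using u by auto
    qed
  qed
  define a where "a = (card U - K) div 2"
  have "a \<le> card (\<Union>CC)" unfolding UCC a_def by simp
  from greedy_split[OF fCC CCb pw this]
  obtain DD where DD: "DD \<subseteq> CC" "a \<le> card (\<Union>DD)" "card (\<Union>DD) \<le> a + K" by blast
  define Y where "Y = \<Union>DD"
  have YU: "Y \<subseteq> U" unfolding Y_def using DD(1) UCC by auto
  have Cl: "z \<in> Y" if y: "y \<in> Y" and z: "z \<in> U" and r: "(adj_in R (V - S))\<^sup>*\<^sup>* y z" for y z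
  proof -
    obtain X where X: "X \<in> DD" "y \<in> X" using y unfolding Y_def by auto
    then obtain u where u: "X = U \<inter> component_of R (V - S) u" using DD(1) unfolding CC_def by auto
    have "(adj_in R (V - S))\<^sup>*\<^sup>* u y" using X(2) u by (simp add: component_of_def)
    then have "(adj_in R (V - S))\<^sup>*\<^sup>* u z" using r by (rule rtranclp_trans)
    moreover have "z \<in> V - S" using z UV US by auto
    ultimately have "z \<in> X" using u z by (simp add: component_of_def)
    then show ?thesis using X(1) unfolding Y_def by auto
  qed
  have PP: "piece L w j \<subseteq> Y" if j: "j \<in> J" and yj: "y \<in> piece L w j" and yY: "y \<in> Y" for j y
  proof
    let ?c = "take L (drop (j * L) w)"
    have s: "successively (adj_in H V) ?c" using succ_take_drop[OF w(2)] by (simp add: V_def)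
    have cV: "set ?c \<subseteq> V" using pV[of j] by (simp add: piece_def)
    have cS: "set ?c \<inter> S = {}" using j by (simp add: J_def piece_def)
    have HR: "H \<subseteq> R" by (simp add: R_def)
    have rr: "\<forall>x\<in>set ?c. (adj_in R (V - S))\<^sup>*\<^sup>* (hd ?c) x" by (rule chunk_reach[OF s cV cS HR])
    fix z assume zj: "z \<in> piece L w j"
    have "(adj_in R (V - S))\<^sup>*\<^sup>* y z"
      using rr yj zj unfolding piece_def by (meson reach_sym rtranclp_trans)
    moreover have "z \<in> U" using zj j unfolding U_def UU_def by auto
    ultimately show "z \<in> Y" using Cl yY by blast
  qed
  define JA where "JA = {j \<in> J. piece L w j \<subseteq> Y}"
  define JB where "JB = J - JA"
  have UA: "UU L w JA = Y"
  proof
    show "UU L w JA \<subseteq> Y" unfolding UU_def JA_def by auto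
    show "Y \<subseteq> UU L w JA"
    proof
      fix y assume yY: "y \<in> Y"
      then have "y \<in> U" using YU by auto
      then obtain j where j: "j \<in> J" "y \<in> piece L w j" unfolding U_def UU_def by auto
      then have "j \<in> JA" using PP[OF j yY] unfolding JA_def by auto
      then show "y \<in> UU L w JA" using j unfolding UU_def by auto
    qed
  qed
  have UB: "UU L w JB = U - Y"
  proof
    show "UU L w JB \<subseteq> U - Y"
    proof
      fix z assume "z \<in> UU L w JB"
      then obtain j where j: "j \<in> J" "j \<notin> JA" "z \<in> piece L w j" unfolding UU_def JB_def by auto
      have "z \<notin> Y"
      proof
        assume "z \<in> Y"
        then have "piece L w j \<subseteq> Y" using PP[OF j(1) j(3)] by simp
        then show False using j unfolding JA_def by auto
      qed
      moreover have "z \<in> U" using j unfolding U_def UU_def by auto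
      ultimately show "z \<in> U - Y" by simp
    qed
    show "U - Y \<subseteq> UU L w JB"
    proof
      fix z assume z: "z \<in> U - Y"
      then obtain j where j: "j \<in> J" "z \<in> piece L w j" unfolding U_def UU_def by auto
      then have "j \<notin> JA" using z unfolding JA_def by auto
      then show "z \<in> UU L w JB" using j unfolding UU_def JB_def by auto
    qed
  qed
  have fY: "finite Y" using finite_subset[OF YU fU] .
  have K2: "2 * K \<le> n + 1" unfolding K_def by presburger
  have Kr: "real K \<le> (real n + 1) / 2"
  proof -
    have "real (2 * K) \<le> real (n + 1)" using K2 by (simp only: of_nat_le_iff)
    then show ?thesis by simp
  qed
  have KU: "K \<le> card U"
  proof -
    have "real K \<le> real (card U)" using Kr cUr n8 by simp
    then show ?thesis by (simp only: of_nat_le_iff)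
  qed
  have a1: "2 * a \<le> card U - K" "card U - K \<le> 2 * a + 1" unfolding a_def by presburger+
  have ar: "real (card U) - real K - 1 \<le> 2 * real a" "2 * real a \<le> real (card U) - real K"
  proof -
    have "real (card U - K) \<le> real (2 * a + 1)" "real (2 * a) \<le> real (card U - K)"
      using a1 by (simp_all only: of_nat_le_iff)
    then show "real (card U) - real K - 1 \<le> 2 * real a" "2 * real a \<le> real (card U) - real K"
      using KU by (simp_all add: of_nat_diff)
  qed
  have cY: "real n / 8 \<le> real (card Y)"
    using DD(2) ar cUr Kr n8 unfolding Y_def by simp
  have cUY: "card (U - Y) = card U - card Y" by (rule card_Diff_subset[OF fY YU])
  have cYU: "card Y \<le> card U" by (rule card_mono[OF fU YU])
  have cY2: "real n / 8 \<le> real (card (U - Y))"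
    using cUY cYU DD(3) ar cUr Kr n8 unfolding Y_def by simp
  have wit: "(JA, JB) \<in> Wit n L w"
    unfolding Wit_def using UA UB cY cY2 unfolding JA_def JB_def J_def k_def by auto
  have noedge: "G \<inter> Fset L w JA JB = {}"
  proof (rule ccontr)
    assume "G \<inter> Fset L w JA JB \<noteq> {}"
    then obtain x y where e: "{x, y} \<in> G" "x \<in> Y" "y \<in> U - Y" unfolding Fset_def UA UB by auto
    have "x \<in> V - S" "y \<in> V - S" using e YU UV US by auto
    moreover have "x \<noteq> y" using e by auto
    ultimately have "adj_in R (V - S) x y" using e(1) by (simp add: adj_in_def R_def)
    then have "y \<in> Y" using Cl[OF e(2)] e(3) by auto
    then show False using e(3) by simp
  qed
  show ?thesis using wit noedge by force
qed




lemma finite_all_pairs: "finite (all_pairs n)"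
proof -
  have "all_pairs n \<subseteq> Pow {..<n}" by (auto simp: all_pairs_def)
  then show ?thesis by (rule finite_subset) simp
qed

definition wgt :: "nat \<Rightarrow> real \<Rightarrow> nat set set \<Rightarrow> real" where
  "wgt n p S = p ^ card S * (1 - p) ^ (card (all_pairs n) - card S)"

lemma gnp_alt: "gnp_prob n p P = (\<Sum>S\<in>Pow (all_pairs n). if P S then wgt n p S else 0)"
proof -
  have "{S. S \<subseteq> all_pairs n \<and> P S} = {S \<in> Pow (all_pairs n). P S}" by auto
  then show ?thesis unfolding gnp_prob_def wgt_def
    using sum.inter_filter[OF finite_Pow_iff[THEN iffD2, OF finite_all_pairs], where P=P]
    by simp
qed

lemma wgt_nonneg: "0 \<le> p \<Longrightarrow> p \<le> 1 \<Longrightarrow> 0 \<le> wgt n p S"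
  unfolding wgt_def by simp

lemma gnp_avoid:
  assumes F: "F \<subseteq> all_pairs n"
  shows "gnp_prob n p (\<lambda>G. G \<inter> F = {}) = (1 - p) ^ card F"
proof -
  let ?A = "all_pairs n"
  have fA: "finite ?A" by (rule finite_all_pairs)
  let ?f1 = "\<lambda>x. if x \<in> F then 0 else p"
  let ?f2 = "\<lambda>x. 1 - p"
  have "(\<Prod>x\<in>?A. ?f1 x + ?f2 x) = (\<Sum>X\<in>Pow ?A. (\<Prod>x\<in>X. ?f1 x) * (\<Prod>x\<in>?A-X. ?f2 x))"
    by (rule prod_add[OF fA])
  also have "\<dots> = (\<Sum>X\<in>Pow ?A. if X \<inter> F = {} then wgt n p X else 0)"
  proof (rule sum.cong[OF refl])
    fix X assume X: "X \<in> Pow ?A"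
    then have fX: "finite X" using fA finite_subset by auto
    have c: "card (?A - X) = card ?A - card X" using X fX by (simp add: card_Diff_subset)
    show "(\<Prod>x\<in>X. ?f1 x) * (\<Prod>x\<in>?A-X. ?f2 x) = (if X \<inter> F = {} then wgt n p X else 0)"
    proof (cases "X \<inter> F = {}")
      case True
      then have "(\<Prod>x\<in>X. ?f1 x) = (\<Prod>x\<in>X. p)" by (intro prod.cong) auto
      then show ?thesis using True c by (simp add: wgt_def)
    next
      case False
      then have "(\<Prod>x\<in>X. ?f1 x) = 0" using fX by (intro prod_zero) auto
      then show ?thesis using False by simp
    qed
  qed
  also have "\<dots> = gnp_prob n p (\<lambda>G. G \<inter> F = {})" by (simp add: gnp_alt)
  finally have e: "gnp_prob n p (\<lambda>G. G \<inter> F = {}) = (\<Prod>x\<in>?A. ?f1 x + ?f2 x)" by simp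
  have "(\<Prod>x\<in>?A. ?f1 x + ?f2 x) = (\<Prod>x\<in>?A. if x \<in> F then 1 - p else 1)"
    by (intro prod.cong) auto
  also have "\<dots> = (\<Prod>x\<in>?A \<inter> F. 1 - p)"
    by (rule prod.inter_restrict[symmetric, OF fA])
  also have "?A \<inter> F = F" using F by auto
  finally show ?thesis using e by simp
qed

lemma gnp_total: "gnp_prob n p (\<lambda>G. True) = 1"
  using gnp_avoid[of "{}" n p] by simp

lemma gnp_compl: "gnp_prob n p P + gnp_prob n p (\<lambda>G. \<not> P G) = 1"
proof -
  have "gnp_prob n p P + gnp_prob n p (\<lambda>G. \<not> P G) =
     (\<Sum>S\<in>Pow (all_pairs n). (if P S then wgt n p S else 0) + (if \<not> P S then wgt n p S else 0))"
    by (simp add: gnp_alt sum.distrib)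
  also have "\<dots> = (\<Sum>S\<in>Pow (all_pairs n). if True then wgt n p S else 0)"
    by (intro sum.cong) auto
  also have "\<dots> = gnp_prob n p (\<lambda>G. True)" by (simp add: gnp_alt)
  finally show ?thesis using gnp_total by simp
qed

lemma gnp_mono:
  assumes "0 \<le> p" "p \<le> 1" "\<And>G. G \<subseteq> all_pairs n \<Longrightarrow> P G \<Longrightarrow> Q G"
  shows "gnp_prob n p P \<le> gnp_prob n p Q"
  unfolding gnp_alt
  by (rule sum_mono) (use assms wgt_nonneg in auto)

lemma gnp_union:
  assumes "0 \<le> p" "p \<le> 1" "finite I"
  shows "gnp_prob n p (\<lambda>G. \<exists>i\<in>I. Q i G) \<le> (\<Sum>i\<in>I. gnp_prob n p (Q i))"
  using assms(3)
proof (induction I rule: finite_induct)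
  case empty
  then show ?case by (simp add: gnp_alt)
next
  case (insert a I)
  have "gnp_prob n p (\<lambda>G. \<exists>i\<in>insert a I. Q i G) \<le>
        gnp_prob n p (Q a) + gnp_prob n p (\<lambda>G. \<exists>i\<in>I. Q i G)"
    unfolding gnp_alt sum.distrib[symmetric]
    by (rule sum_mono) (use assms wgt_nonneg in auto)
  also have "\<dots> \<le> gnp_prob n p (Q a) + (\<Sum>i\<in>I. gnp_prob n p (Q i))"
    using insert.IH by simp
  finally show ?case using insert.hyps by simp
qed




lemma Fset_sub:
  assumes "set w \<subseteq> {..<n}" "UU L w JA \<inter> UU L w JB = {}"
  shows "Fset L w JA JB \<subseteq> all_pairs n"
proof
  fix e assume "e \<in> Fset L w JA JB"
  then obtain a b where e: "e = {a, b}" "a \<in> UU L w JA" "b \<in> UU L w JB" unfolding Fset_def by auto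
  have "a \<in> set w" "b \<in> set w" using e piece_sub[of L w] unfolding UU_def by auto
  then have "a < n" "b < n" using assms(1) by auto
  moreover have "a \<noteq> b" using e assms(2) by auto
  ultimately show "e \<in> all_pairs n" unfolding all_pairs_def using e(1) by blast
qed

lemma Fset_card:
  assumes "UU L w JA \<inter> UU L w JB = {}"
  shows "card (Fset L w JA JB) = card (UU L w JA) * card (UU L w JB)"
proof -
  have "Fset L w JA JB = (\<lambda>(a, b). {a, b}) ` (UU L w JA \<times> UU L w JB)"
    unfolding Fset_def by auto
  moreover have "inj_on (\<lambda>(a, b). {a, b}) (UU L w JA \<times> UU L w JB)"
  proof (rule inj_onI, clarify)
    fix a b a' b' assume "a \<in> UU L w JA" "b \<in> UU L w JB" "a' \<in> UU L w JA" "b' \<in> UU L w JB"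
      "{a, b} = {a', b'}"
    then show "a = a' \<and> b = b'" using assms by (auto simp: doubleton_eq_iff)
  qed
  ultimately show ?thesis by (simp add: card_image card_cartesian_product)
qed

lemma pow_exp_bound:
  assumes "0 \<le> p" "p \<le> 1" "real n * real n / 64 \<le> real m"
  shows "(1 - p) ^ m \<le> exp (- p * real n * real n / 64)"
proof -
  have "(1 - p) ^ m \<le> exp (- p) ^ m"
    using assms exp_ge_add_one_self[of "-p"] by (intro power_mono) auto
  also have "\<dots> = exp (- p * real m)" by (simp add: exp_of_nat_mult[symmetric] mult.commute)
  also have "\<dots> \<le> exp (- p * real n * real n / 64)"
  proof -
    have "p * (real n * real n / 64) \<le> p * real m" using assms by (intro mult_left_mono) auto
    then show ?thesis by simp
  qed
  finally show ?thesis .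
qed

lemma card_Wit: "card (Wit n L w) \<le> 4 ^ nchunks L w"
proof -
  have "Wit n L w \<subseteq> Pow {..<nchunks L w} \<times> Pow {..<nchunks L w}"
    unfolding Wit_def by auto
  then have "card (Wit n L w) \<le> card (Pow {..<nchunks L w} \<times> Pow {..<nchunks L w})"
    by (rule card_mono[rotated]) simp
  also have "\<dots> = 4 ^ nchunks L w"
    by (simp add: card_cartesian_product card_Pow power_mult_distrib[symmetric])
  finally show ?thesis .
qed

lemma prob_bound:
  assumes "0 \<le> p" "p \<le> 1" "set w \<subseteq> {..<n}"
  shows "gnp_prob n p (\<lambda>G. \<exists>x\<in>Wit n L w. G \<inter> Fset L w (fst x) (snd x) = {})
         \<le> 4 ^ nchunks L w * exp (- p * real n * real n / 64)"
proof -
  have fW: "finite (Wit n L w)"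
  proof (rule finite_subset)
    show "Wit n L w \<subseteq> Pow {..<nchunks L w} \<times> Pow {..<nchunks L w}" unfolding Wit_def by auto
  qed simp
  have "gnp_prob n p (\<lambda>G. \<exists>x\<in>Wit n L w. G \<inter> Fset L w (fst x) (snd x) = {})
        \<le> (\<Sum>x\<in>Wit n L w. gnp_prob n p (\<lambda>G. G \<inter> Fset L w (fst x) (snd x) = {}))"
    by (rule gnp_union[OF assms(1,2) fW])
  also have "\<dots> \<le> (\<Sum>x\<in>Wit n L w. exp (- p * real n * real n / 64))"
  proof (rule sum_mono)
    fix x assume x: "x \<in> Wit n L w"
    obtain JA JB where xe: "x = (JA, JB)" by (cases x)
    have d: "UU L w JA \<inter> UU L w JB = {}" and s1: "real n / 8 \<le> real (card (UU L w JA))"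
      and s2: "real n / 8 \<le> real (card (UU L w JB))"
      using x unfolding xe Wit_def by auto
    have "gnp_prob n p (\<lambda>G. G \<inter> Fset L w JA JB = {}) = (1 - p) ^ card (Fset L w JA JB)"
      by (rule gnp_avoid[OF Fset_sub[OF assms(3) d]])
    also have "\<dots> \<le> exp (- p * real n * real n / 64)"
    proof (rule pow_exp_bound[OF assms(1,2)])
      have "real n / 8 * (real n / 8) \<le> real (card (UU L w JA)) * real (card (UU L w JB))"
        using s1 s2 by (intro mult_mono) auto
      then show "real n * real n / 64 \<le> real (card (Fset L w JA JB))"
        using Fset_card[OF d] by simp
    qed
    finally show "gnp_prob n p (\<lambda>G. G \<inter> Fset L w (fst x) (snd x) = {}) \<le> exp (- p * real n * real n / 64)"
      using xe by simp
  qed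
  also have "\<dots> = real (card (Wit n L w)) * exp (- p * real n * real n / 64)" by simp
  also have "\<dots> \<le> 4 ^ nchunks L w * exp (- p * real n * real n / 64)"
  proof (rule mult_right_mono)
    have "real (card (Wit n L w)) \<le> real (4 ^ nchunks L w)" using card_Wit by (simp only: of_nat_le_iff)
    then show "real (card (Wit n L w)) \<le> 4 ^ nchunks L w" by simp
  qed simp
  finally show ?thesis .
qed




lemma four_le_exp2: "(4::real) \<le> exp 2"
proof -
  have e1: "2 \<le> exp (1::real)" using exp_ge_add_one_self[of 1] by simp
  have "exp (2::real) = exp 1 * exp 1" by (simp add: exp_add[symmetric])
  moreover have "(2::real) * 2 \<le> exp 1 * exp 1" using e1 by (intro mult_mono) auto
  ultimately show ?thesis by simp
qed

lemma pow4_le: "(4::real) ^ m \<le> exp (2 * real m)"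
proof -
  have "(4::real) ^ m \<le> exp 2 ^ m" using four_le_exp2 by (intro power_mono) auto
  also have "\<dots> = exp (2 * real m)" by (simp add: exp_of_nat_mult[symmetric] mult.commute)
  finally show ?thesis .
qed

lemma deg_ok_H:
  assumes g: "is_graph n H"
  shows "deg_ok H {..<n} (max_degree n H)"
  unfolding deg_ok_def
proof
  fix x assume x: "x \<in> {..<n}"
  have sub: "{y \<in> {..<n}. adj_in H {..<n} x y} \<subseteq> {v. v \<noteq> x \<and> {x, v} \<in> H}"
    by (auto simp: adj_in_def)
  have fin: "finite {v. v \<noteq> x \<and> {x, v} \<in> H}"
  proof (rule finite_subset)
    show "{v. v \<noteq> x \<and> {x, v} \<in> H} \<subseteq> {..<n}"
    proof
      fix v assume "v \<in> {v. v \<noteq> x \<and> {x, v} \<in> H}"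
      then have "{x, v} \<in> all_pairs n" "v \<noteq> x" using g unfolding is_graph_def by auto
      then show "v \<in> {..<n}" unfolding all_pairs_def by (auto simp: doubleton_eq_iff)
    qed
  qed simp
  have "card {y \<in> {..<n}. adj_in H {..<n} x y} \<le> degree H x"
    unfolding degree_def by (rule card_mono[OF fin sub])
  also have "\<dots> \<le> max_degree n H" unfolding max_degree_def using x by (intro Max_ge) auto
  finally show "card {y \<in> {..<n}. adj_in H {..<n} x y} \<le> max_degree n H" .
qed




lemma per_n:
  fixes n :: nat and p :: real and H :: "nat set set"
  assumes n8: "n \<ge> 8" and p0: "0 < p" and p2: "p \<le> 2 / real n" and g: "is_graph n H"
    and con: "connected_on H {..<n}" and D1: "1 \<le> max_degree n H"
  shows "1 - 4 * exp (- (real n ^ 2 * p) / 128) \<le>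
    gnp_prob n p (\<lambda>G. real (td (H \<union> G) {..<n}) \<ge>
        1 / 65536 * (real (td H {..<n}) + real n ^ 2 * p / real (max_degree n H)))"
proof -
  define V where "V = {..<n}"
  define \<Delta> where "\<Delta> = max_degree n H"
  define X where "X = real n ^ 2 * p"
  define L where "L = nat \<lceil>512 / (p * real n)\<rceil>"
  have nr: "real n \<ge> 8" using n8 by simp
  have pn2: "p * real n \<le> 2" using p2 nr by (simp add: field_simps)
  have pn0: "0 < p * real n" using p0 nr by simp
  have "2 / real n \<le> 1" using nr by simp
  then have p1: "p \<le> 1" using p2 by linarith
  have Dr: "real \<Delta> \<ge> 1" using D1 unfolding \<Delta>_def by simp
  have x0: "0 < 512 / (p * real n)" using pn0 by simp
  have cn: "real L = real_of_int \<lceil>512 / (p * real n)\<rceil>" unfolding L_def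
    using x0 by (simp add: of_nat_nat)
  have Lge: "512 / (p * real n) \<le> real L" unfolding cn by (rule le_of_int_ceiling)
  have Lle: "real L \<le> 512 / (p * real n) + 1" unfolding cn by (rule of_int_ceiling_le_add_one)
  have q: "256 \<le> 512 / (p * real n)" using pn2 pn0 by (simp add: field_simps)
  have Lle2: "real L \<le> 1024 / (p * real n)" using Lle q by simp
  have L1: "L \<ge> 1" using Lge q by linarith
  have pnL: "p * real n * real L \<le> 1024" using Lle2 pn0 by (simp add: field_simps)
  have pnL2: "512 \<le> p * real n * real L" using Lge pn0 by (simp add: field_simps)
  have n0: "0 \<in> V" using n8 by (simp add: V_def)
  from walk_exists[of V H 0 \<Delta>, OF _ con[folded V_def] n0 deg_ok_H[OF g, folded V_def \<Delta>_def]]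
  obtain w where w: "set w = V" "length w + 1 \<le> 2 * card V" "successively (adj_in H V) w"
      "\<forall>x. cnt x w \<le> \<Delta> + 1"
    by (auto simp: V_def)
  have cV: "card V = n" by (simp add: V_def)
  define Good where "Good = (\<lambda>G. real (td (H \<union> G) {..<n}) \<ge>
        1 / 65536 * (real (td H {..<n}) + real n ^ 2 * p / real (max_degree n H)))"
  define Bad where "Bad = (\<lambda>G. \<exists>x\<in>Wit n L w. G \<inter> Fset L w (fst x) (snd x) = {})"
  have imp: "Bad G" if G: "G \<subseteq> all_pairs n" "\<not> Good G" for G
  proof -
    define T where "T = real (td (H \<union> G) V)"
    define t0 where "t0 = real (td H V)"
    have tt: "t0 \<le> T" unfolding T_def t0_def V_def
      by (simp only: of_nat_le_iff, rule td_mono_aux, auto)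
    have lt: "T < 1 / 65536 * (t0 + X / real \<Delta>)"
      using G(2) unfolding Good_def T_def t0_def V_def X_def \<Delta>_def by simp
    have T0: "0 \<le> T" unfolding T_def by simp
    have lt2: "65536 * T < t0 + X / real \<Delta>" using lt by simp
    have TY: "T * 65535 \<le> X / real \<Delta>" using lt2 tt by linarith
    have "T * real (\<Delta> + 1) * real L \<le> T * (2 * real \<Delta>) * real L"
      using Dr T0 Lge q by (intro mult_right_mono mult_left_mono) auto
    also have "\<dots> = 2 * (T * 65535 * real \<Delta>) * real L / 65535" by simp
    also have "\<dots> \<le> 2 * (X / real \<Delta> * real \<Delta>) * real L / 65535"
      using TY Dr by (intro divide_right_mono mult_right_mono mult_left_mono) auto
    also have "\<dots> = 2 * X * real L / 65535" using Dr by simp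
    also have "\<dots> = 2 * real n * (p * real n * real L) / 65535" unfolding X_def
      by (simp add: power2_eq_square)
    also have "\<dots> \<le> 2 * real n * 1024 / 65535"
      using pnL nr by (intro divide_right_mono mult_left_mono) auto
    also have "\<dots> \<le> real n / 16" using nr by simp
    finally have small: "real (td (H \<union> G) {..<n}) * real (\<Delta> + 1) * real L \<le> real n / 16"
      unfolding T_def V_def .
    have "\<exists>x \<in> Wit n L w. G \<inter> Fset L w (fst x) (snd x) = {}"
      by (rule main_det[OF w(1)[unfolded V_def] w(3)[unfolded V_def] w(4) L1 small n8])
    then show ?thesis unfolding Bad_def .
  qed
  have gB: "gnp_prob n p (\<lambda>G. \<not> Good G) \<le> gnp_prob n p Bad"
    by (rule gnp_mono) (use p0 p1 imp in auto)
  have pb: "gnp_prob n p Bad \<le> 4 ^ nchunks L w * exp (- p * real n * real n / 64)"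
    unfolding Bad_def by (rule prob_bound) (use p0 p1 w(1) V_def in auto)
  have "real (length w div L) \<le> real (length w) / real L" by (rule of_nat_div_le_of_nat)
  also have "\<dots> \<le> 2 * real n / real L"
    using w(2) cV L1 by (intro divide_right_mono) auto
  also have "\<dots> \<le> 2 * real n * (p * real n) / 512"
  proof -
    have "2 * real n / real L = 2 * real n * (p * real n) / (p * real n * real L)"
      using pn0 L1 p0 by (simp add: field_simps)
    also have "\<dots> \<le> 2 * real n * (p * real n) / 512"
      using pnL2 pn0 nr by (intro divide_left_mono) auto
    finally show ?thesis .
  qed
  finally have mb: "2 * real (length w div L) \<le> X / 128" unfolding X_def
    by (simp add: power2_eq_square field_simps)
  have "4 ^ nchunks L w * exp (- p * real n * real n / 64)
        = 4 * 4 ^ (length w div L) * exp (- X / 64)"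
    unfolding nchunks_def X_def by (simp add: power2_eq_square mult.commute mult.left_commute)
  also have "\<dots> \<le> 4 * exp (X / 128) * exp (- X / 64)"
  proof -
    have "(4::real) ^ (length w div L) \<le> exp (X / 128)"
      using pow4_le[of "length w div L"] mb by (meson exp_le_cancel_iff order_trans)
    then show ?thesis by (intro mult_right_mono mult_left_mono) auto
  qed
  also have "\<dots> = 4 * exp (- X / 128)" by (simp add: exp_add[symmetric] mult.assoc)
  finally have fb: "gnp_prob n p (\<lambda>G. \<not> Good G) \<le> 4 * exp (- X / 128)" using gB pb by linarith
  have "gnp_prob n p Good = 1 - gnp_prob n p (\<lambda>G. \<not> Good G)" using gnp_compl[of n p Good] by linarith
  then have "1 - 4 * exp (- X / 128) \<le> gnp_prob n p Good" using fb by linarith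
  then show ?thesis unfolding Good_def X_def by simp
qed




theorem mainTheorem6:
  "\<exists>c::real. c > 0 \<and>
     (\<forall>(p::nat \<Rightarrow> real) (H::nat \<Rightarrow> nat set set).
        (\<forall>\<^sub>F n in sequentially. 0 < p n \<and> p n \<le> 2 / real n) \<longrightarrow>
        filterlim (\<lambda>n. real n ^ 2 * p n) at_top sequentially \<longrightarrow>
        (\<forall>\<^sub>F n in sequentially.
            is_graph n (H n) \<and> connected_on (H n) {..<n} \<and>
            1 \<le> max_degree n (H n) \<and>
            real (max_degree n (H n)) \<le> real n ^ 2 * p n / 57600) \<longrightarrow>
        ((\<lambda>n. gnp_prob n (p n)
                (\<lambda>G. real (td (H n \<union> G) {..<n})
                       \<ge> c * (real (td (H n) {..<n})
                              + real n ^ 2 * p n / real (max_degree n (H n)))))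
          \<longlonglongrightarrow> 1))"
proof (intro exI[of _ "1 / 65536"] conjI allI impI)
  show "(0::real) < 1 / 65536" by simp
  fix p :: "nat \<Rightarrow> real" and H :: "nat \<Rightarrow> nat set set"
  assume ep: "\<forall>\<^sub>F n in sequentially. 0 < p n \<and> p n \<le> 2 / real n"
    and xt: "filterlim (\<lambda>n. real n ^ 2 * p n) at_top sequentially"
    and eH: "\<forall>\<^sub>F n in sequentially.
            is_graph n (H n) \<and> connected_on (H n) {..<n} \<and>
            1 \<le> max_degree n (H n) \<and>
            real (max_degree n (H n)) \<le> real n ^ 2 * p n / 57600"
  define g where "g = (\<lambda>n. gnp_prob n (p n)
                (\<lambda>G. real (td (H n \<union> G) {..<n})
                       \<ge> 1 / 65536 * (real (td (H n) {..<n})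
                              + real n ^ 2 * p n / real (max_degree n (H n)))))"
  have ev: "\<forall>\<^sub>F n in sequentially. (0 < p n \<and> p n \<le> 2 / real n) \<and>
            (is_graph n (H n) \<and> connected_on (H n) {..<n} \<and>
            1 \<le> max_degree n (H n) \<and>
            real (max_degree n (H n)) \<le> real n ^ 2 * p n / 57600) \<and> n \<ge> 8"
    by (intro eventually_conj ep eH eventually_ge_at_top)
  have lower: "\<forall>\<^sub>F n in sequentially. 1 - 4 * exp (- (real n ^ 2 * p n) / 128) \<le> g n"
    using ev
  proof (rule eventually_mono)
    fix n assume a: "(0 < p n \<and> p n \<le> 2 / real n) \<and>
            (is_graph n (H n) \<and> connected_on (H n) {..<n} \<and>
            1 \<le> max_degree n (H n) \<and>
            real (max_degree n (H n)) \<le> real n ^ 2 * p n / 57600) \<and> n \<ge> 8"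
    show "1 - 4 * exp (- (real n ^ 2 * p n) / 128) \<le> g n"
      unfolding g_def by (rule per_n) (use a in auto)
  qed
  have upper: "\<forall>\<^sub>F n in sequentially. g n \<le> 1"
    using ev
  proof (rule eventually_mono)
    fix n assume a: "(0 < p n \<and> p n \<le> 2 / real n) \<and>
            (is_graph n (H n) \<and> connected_on (H n) {..<n} \<and>
            1 \<le> max_degree n (H n) \<and>
            real (max_degree n (H n)) \<le> real n ^ 2 * p n / 57600) \<and> n \<ge> 8"
    have "2 / real n \<le> 1" using a by simp
    then have "p n \<le> 1" using a by linarith
    then have "g n \<le> gnp_prob n (p n) (\<lambda>G. True)"
      unfolding g_def by (intro gnp_mono) (use a in auto)
    then show "g n \<le> 1" using gnp_total by simp
  qed
  have x1: "filterlim (\<lambda>n. 1 / 128 * (real n ^ 2 * p n)) at_top sequentially"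
    by (rule filterlim_tendsto_pos_mult_at_top[OF tendsto_const _ xt]) simp
  have x2: "filterlim (\<lambda>n. - (real n ^ 2 * p n) / 128) at_bot sequentially"
    using x1 by (subst filterlim_uminus_at_bot) simp
  have x3: "(\<lambda>n. exp (- (real n ^ 2 * p n) / 128)) \<longlonglongrightarrow> 0"
    by (rule filterlim_compose[OF exp_at_bot x2])
  have x4: "(\<lambda>n. 1 - 4 * exp (- (real n ^ 2 * p n) / 128)) \<longlonglongrightarrow> 1"
    using tendsto_diff[OF tendsto_const tendsto_mult[OF tendsto_const x3], of 1 4] by simp
  have "g \<longlonglongrightarrow> 1" by (rule tendsto_sandwich[OF lower upper x4 tendsto_const])
  then show "(\<lambda>n. gnp_prob n (p n)
                (\<lambda>G. real (td (H n \<union> G) {..<n})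
                       \<ge> 1 / 65536 * (real (td (H n) {..<n})
                              + real n ^ 2 * p n / real (max_degree n (H n))))) \<longlonglongrightarrow> 1"
    unfolding g_def .
qed


end
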